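(* For every $k\ge2$, the $k$-way indicator aggregation portfolio strategy $\mathrm{IA}[k]$ is universalizable.
   Context: Market with $m\ge2$ assets and return vectors $\mathbf x_t\in(0,\infty)^m$, $t\ge0$. On each day $t$, each stock $i$ has indicators $\mathbf v_{ti}=(v_{ti1},\dots,v_{tik})\in(0,1]^k$, normalized so that for every $t$ and $j$ there is some $i$ with $v_{tij}=1$. $\mathrm{IA}[k]$ has parameter space $\mathcal W_k=\{\mathbf w\in[0,1]^k:\sum_j w_j=1\}$ and description $\mathrm{IA}_t(\mathbf w)=\Big(\frac{\mathbf w\cdot\mathbf v_{t1}}{\sum_{l=1}^m\mathbf w\cdot\mathbf v_{tl}},\dots,\frac{\mathbf w\cdot\mathbf v_{tm}}{\sum_{l=1}^m\mathbf w\cdot\mathbf v_{tl}}\Big)$. General notions: for a strategy $S$ with parameter space $\mathbb W$ and descriptions $S_t(\mathbf w)\in\mathcal W_m$, $\mathcal R_n(S(\mathbf w))=\prod_{t=0}^{n-1}S_t(\mathbf w)\cdot\mathbf x_t$ ($\mathcal R_0\equiv1$), $\mathcal L_n=\frac1n\log\mathcal R_n$, similarly for parameter-free strategies. $\mu$ is the uniform probability measure on $\mathbb W$ and $\mathcal U(S)$ has $\mathcal U_t(S)=\int_{\mathbb W}S_t\mathcal R_t\,d\mu/\int_{\mathbb W}\mathcal R_t\,d\mu$. $U$ is a universalization of $S$ if there is $\eta_n\to0$, independent of market data, with $\mathcal L_n(U)\ge\sup_{\mathbf w}\mathcal L_n(S(\mathbf w))-\eta_n$ for all $n$ and all market data.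 The $\varepsilon$-modification is $\bar S_t(\mathbf w)=(1-\frac{\varepsilon}{2(t+1)^2})S_t(\mathbf w)+\frac{\varepsilon}{2m(t+1)^2}(1,\dots,1)$; $S$ is universalizable if for every $\varepsilon\in(0,1)$, $\mathcal U(\bar S)$ is a universalization of $S$. *)

theory Defs
  imports "HOL-Analysis.Analysis"
begin

text \<open>Assets are indexed by 0..<m, indicators by 0..<k, days by t :: nat.
  Vectors are functions nat => real; only the indicated indices matter.
  A (parametrised) strategy depends on market data d :: 'd and is a function
  S d t w i = i-th weight of the portfolio on day t for parameter w.\<close>

definition dotm :: "nat \<Rightarrow> (nat \<Rightarrow> real) \<Rightarrow> (nat \<Rightarrow> real) \<Rightarrow> real" where
  "dotm m b x = (\<Sum>i<m. b i * x i)"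

definition wealth :: "nat \<Rightarrow> (nat \<Rightarrow> nat \<Rightarrow> real) \<Rightarrow> (nat \<Rightarrow> nat \<Rightarrow> real) \<Rightarrow> nat \<Rightarrow> real" where
  "wealth m x P n = (\<Prod>t<n. dotm m (P t) (x t))"

definition growth :: "nat \<Rightarrow> (nat \<Rightarrow> nat \<Rightarrow> real) \<Rightarrow> (nat \<Rightarrow> nat \<Rightarrow> real) \<Rightarrow> nat \<Rightarrow> real" where
  "growth m x P n = ln (wealth m x P n) / real n"

definition univ_port ::
  "'w measure \<Rightarrow> nat \<Rightarrow> ('d \<Rightarrow> nat \<Rightarrow> nat \<Rightarrow> real) \<Rightarrow>
   ('d \<Rightarrow> nat \<Rightarrow> 'w \<Rightarrow> nat \<Rightarrow> real) \<Rightarrow> 'd \<Rightarrow> nat \<Rightarrow> nat \<Rightarrow> real" where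
  "univ_port \<mu> m xs S d t i =
     (\<integral>w. S d t w i * wealth m (xs d) (\<lambda>s. S d s w) t \<partial>\<mu>) /
     (\<integral>w. wealth m (xs d) (\<lambda>s. S d s w) t \<partial>\<mu>)"

definition is_universalization ::
  "'d set \<Rightarrow> nat \<Rightarrow> ('d \<Rightarrow> nat \<Rightarrow> nat \<Rightarrow> real) \<Rightarrow> 'w set \<Rightarrow>
   ('d \<Rightarrow> nat \<Rightarrow> nat \<Rightarrow> real) \<Rightarrow> ('d \<Rightarrow> nat \<Rightarrow> 'w \<Rightarrow> nat \<Rightarrow> real) \<Rightarrow> bool" where
  "is_universalization Data m xs W U S \<longleftrightarrow>
     (\<exists>\<eta>::nat \<Rightarrow> real. \<eta> \<longlonglongrightarrow> 0 \<and>
        (\<forall>d\<in>Data. \<forall>n\<ge>1.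
           growth m (xs d) (U d) n \<ge> (SUP w\<in>W. growth m (xs d) (\<lambda>t. S d t w) n) - \<eta> n))"

definition eps_mod ::
  "nat \<Rightarrow> real \<Rightarrow> ('d \<Rightarrow> nat \<Rightarrow> 'w \<Rightarrow> nat \<Rightarrow> real) \<Rightarrow> 'd \<Rightarrow> nat \<Rightarrow> 'w \<Rightarrow> nat \<Rightarrow> real" where
  "eps_mod m \<epsilon> S d t w i =
     (1 - \<epsilon> / (2 * (real t + 1)^2)) * S d t w i + \<epsilon> / (2 * real m * (real t + 1)^2)"

definition universalizable ::
  "'d set \<Rightarrow> nat \<Rightarrow> ('d \<Rightarrow> nat \<Rightarrow> nat \<Rightarrow> real) \<Rightarrow> 'w set \<Rightarrow> 'w measure \<Rightarrow>
   ('d \<Rightarrow> nat \<Rightarrow> 'w \<Rightarrow> nat \<Rightarrow> real) \<Rightarrow> bool" where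
  "universalizable Data m xs W \<mu> S \<longleftrightarrow>
     (\<forall>\<epsilon>. 0 < \<epsilon> \<and> \<epsilon> < 1 \<longrightarrow>
        is_universalization Data m xs W (univ_port \<mu> m xs (eps_mod m \<epsilon> S)) S)"

definition param_simplex :: "nat \<Rightarrow> (nat \<Rightarrow> real) set" where
  "param_simplex k = {w. (\<forall>j<k. 0 \<le> w j \<and> w j \<le> 1) \<and> (\<forall>j\<ge>k. w j = 0) \<and> (\<Sum>j<k. w j) = 1}"

text \<open>Uniform probability measure on W_k: the normalised Lebesgue measure on the
  projected simplex {u in R^(k-1). u >= 0, sum u <= 1}, pushed forward by the affine
  bijection onto W_k (which has constant Jacobian, hence preserves uniformity).\<close>
definition simplex_base :: "nat \<Rightarrow> (nat \<Rightarrow> real) set" where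
  "simplex_base k = {u \<in> space (PiM {..<k-1} (\<lambda>_. lborel)).
      (\<forall>i<k-1. 0 \<le> u i) \<and> (\<Sum>i<k-1. u i) \<le> 1}"

definition simplex_embed :: "nat \<Rightarrow> (nat \<Rightarrow> real) \<Rightarrow> nat \<Rightarrow> real" where
  "simplex_embed k u = (\<lambda>j. if j < k - 1 then u j else if j = k - 1 then 1 - (\<Sum>i<k-1. u i) else 0)"

definition unif_simplex :: "nat \<Rightarrow> (nat \<Rightarrow> real) measure" where
  "unif_simplex k = distr (uniform_measure (PiM {..<k-1} (\<lambda>_. lborel)) (simplex_base k))
                          (PiM UNIV (\<lambda>_. borel)) (simplex_embed k)"

definition IA_data :: "nat \<Rightarrow> nat \<Rightarrow> ((nat \<Rightarrow> nat \<Rightarrow> real) \<times> (nat \<Rightarrow> nat \<Rightarrow> nat \<Rightarrow> real)) set" where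
  "IA_data m k = {(x, v).
      (\<forall>t i. i < m \<longrightarrow> 0 < x t i) \<and>
      (\<forall>t i j. i < m \<longrightarrow> j < k \<longrightarrow> 0 < v t i j \<and> v t i j \<le> 1) \<and>
      (\<forall>t j. j < k \<longrightarrow> (\<exists>i<m. v t i j = 1))}"

definition IA :: "nat \<Rightarrow> nat \<Rightarrow> (nat \<Rightarrow> nat \<Rightarrow> nat \<Rightarrow> real) \<Rightarrow> nat \<Rightarrow> (nat \<Rightarrow> real) \<Rightarrow> nat \<Rightarrow> real" where
  "IA k m v t w i = (\<Sum>j<k. w j * v t i j) / (\<Sum>l<m. \<Sum>j<k. w j * v t l j)"

end

theory Submission
  imports Defs "HOL-Probability.Probability" "HOL-Real_Asymp.Real_Asymp"
begin

abbreviation "LL (k::nat) \<equiv> PiM {..<k-1} (\<lambda>_. lborel :: real measure)"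

lemma sb_eq: "simplex_base k = {x. (\<forall>i\<in>{..<k-1}. 0 \<le> x i) \<and> sum x {..<k-1} \<le> 1} \<inter> space (LL k)"
  unfolding simplex_base_def by auto

lemma sb_sets[measurable]: "simplex_base k \<in> sets (LL k)"
  unfolding simplex_base_def by measurable

lemma sb_sets'[measurable]: "simplex_base k \<in> sets (PiM {..<k - Suc 0} (\<lambda>_. lborel))"
  using sb_sets[of k] by simp

lemma sb_emeasure: "emeasure (LL k) (simplex_base k) = ennreal (1 / fact (k-1))"
  using emeasure_std_simplex_aux[of "{..<k-1}" 1] unfolding sb_eq by simp

lemma box_sets[measurable]: "PiE {..<k-1} (\<lambda>i. {a i..b i::real}) \<in> sets (LL k)"
  using sets_PiM_I_finite[of "{..<k-1}" "\<lambda>i. {a i..b i}" "\<lambda>_. lborel"] by simp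

lemma box_emeasure: assumes "h \<ge> 0"
  shows "emeasure (LL k) (PiE {..<k-1} (\<lambda>i. {a i..a i + h})) = ennreal (h^(k-1))"
proof -
  interpret product_sigma_finite "\<lambda>_. lborel :: real measure" by standard
  show ?thesis using assms
    by (subst emeasure_PiM) (auto simp: prod_ennreal ennreal_power)
qed
abbreviation "NN (k::nat) \<equiv> uniform_measure (LL k) (simplex_base k)"

lemma sb_pos: "emeasure (LL k) (simplex_base k) \<noteq> 0" "emeasure (LL k) (simplex_base k) \<noteq> \<infinity>"
  using sb_emeasure[of k] by simp_all

lemma measure_sb: "measure (LL k) (simplex_base k) = 1 / fact (k-1)"
  using sb_emeasure[of k] by (simp add: measure_def)

lemma prob_NN: "prob_space (NN k)"
proof (rule prob_spaceI)
  have "simplex_base k \<inter> space (LL k) = simplex_base k"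
    using sets.sets_into_space[OF sb_sets[of k]] by blast
  then have "emeasure (NN k) (space (LL k)) = emeasure (LL k) (simplex_base k) / emeasure (LL k) (simplex_base k)"
    by (subst emeasure_uniform_measure) auto
  also have "\<dots> = 1" unfolding sb_emeasure
    by (subst divide_ennreal) auto
  finally show "emeasure (NN k) (space (NN k)) = 1" by simp
qed

lemma embed_meas[measurable]: "simplex_embed k \<in> measurable (LL k) (PiM UNIV (\<lambda>_. borel))"
proof (rule measurable_PiM_single')
  fix j :: nat
  show "(\<lambda>u. simplex_embed k u j) \<in> measurable (LL k) borel"
  proof (cases "j < k - 1")
    case True
    then show ?thesis unfolding simplex_embed_def by simp
  next
    case False
    then show ?thesis unfolding simplex_embed_def by (cases "j = k - 1") simp_all
  qed
qed (simp add: space_PiM)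

lemma embed_meas_NN[measurable]: "simplex_embed k \<in> measurable (NN k) (PiM UNIV (\<lambda>_. borel))"
  using embed_meas by (simp add: measurable_def)

lemma unif_eq: "unif_simplex k = distr (NN k) (PiM UNIV (\<lambda>_. borel)) (simplex_embed k)"
  unfolding unif_simplex_def ..

lemma prob_unif: "prob_space (unif_simplex k)"
  unfolding unif_eq by (intro prob_space.prob_space_distr prob_NN embed_meas_NN)

lemma AE_NN: "AE u in NN k. u \<in> simplex_base k"
  by (rule AE_uniform_measureI) (auto simp del: One_nat_def)

lemma box_sub: assumes "\<And>i. i < k - 1 \<Longrightarrow> a i \<ge> 0" "h \<ge> 0" "(\<Sum>i<k-1. a i) + real (k-1) * h \<le> 1"
  shows "PiE {..<k-1} (\<lambda>i. {a i..a i + h}) \<subseteq> simplex_base k"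
proof
  fix u assume u: "u \<in> PiE {..<k-1} (\<lambda>i. {a i..a i + h})"
  have ui: "a i \<le> u i \<and> u i \<le> a i + h" if "i < k - 1" for i
    using PiE_mem[OF u, of i] that by simp
  have "(\<Sum>i<k-1. u i) \<le> (\<Sum>i<k-1. a i + h)"
    using ui by (intro sum_mono) simp
  also have "\<dots> = (\<Sum>i<k-1. a i) + real (k-1) * h" by (simp add: sum.distrib)
  finally have "(\<Sum>i<k-1. u i) \<le> 1" using assms(3) by linarith
  moreover have "\<forall>i<k-1. 0 \<le> u i"
  proof (intro allI impI)
    fix i assume "i < k - 1"
    with ui[OF this] assms(1)[OF this] show "0 \<le> u i" by linarith
  qed
  moreover have "PiE {..<k-1} (\<lambda>i. {a i..a i+h}) \<subseteq> PiE {..<k-1} (\<lambda>_. UNIV)"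
    by (rule PiE_mono) simp
  then have "u \<in> space (LL k)" using u by (simp add: space_PiM) blast
  ultimately show "u \<in> simplex_base k" unfolding simplex_base_def by blast
qed

lemma measure_box_NN: assumes "\<And>i. i < k - 1 \<Longrightarrow> a i \<ge> 0" "h \<ge> 0" "(\<Sum>i<k-1. a i) + real (k-1) * h \<le> 1"
  shows "measure (NN k) (PiE {..<k-1} (\<lambda>i. {a i..a i + h})) \<ge> h^(k-1)"
proof -
  have sub: "simplex_base k \<inter> PiE {..<k-1} (\<lambda>i. {a i..a i + h}) = PiE {..<k-1} (\<lambda>i. {a i..a i + h})"
    using box_sub[OF assms] by blast
  have mb: "measure (LL k) (PiE {..<k-1} (\<lambda>i. {a i..a i + h})) = h^(k-1)"
    using box_emeasure[OF assms(2), of k a] assms(2) by (simp add: measure_def)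
  have "measure (NN k) (PiE {..<k-1} (\<lambda>i. {a i..a i + h})) = 
     measure (LL k) (simplex_base k \<inter> PiE {..<k-1} (\<lambda>i. {a i..a i + h})) / measure (LL k) (simplex_base k)"
    by (rule measure_uniform_measure[OF sb_pos box_sets])
  also have "\<dots> = h^(k-1) * fact (k-1)" unfolding sub mb measure_sb by simp
  finally have "measure (NN k) (PiE {..<k-1} (\<lambda>i. {a i..a i + h})) = h^(k-1) * fact (k-1)" .
  moreover have "h^(k-1) \<le> h^(k-1) * fact (k-1)"
    using assms(2) by (simp add: mult_le_cancel_left1) 
  ultimately show ?thesis by simp
qed


definition asum :: "nat \<Rightarrow> (nat \<Rightarrow> nat \<Rightarrow> nat \<Rightarrow> real) \<Rightarrow> nat \<Rightarrow> (nat \<Rightarrow> real) \<Rightarrow> nat \<Rightarrow> real" where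
  "asum k v t w i = (\<Sum>j<k. w j * v t i j)"

lemma IA_asum: "IA k m v t w i = asum k v t w i / (\<Sum>l<m. asum k v t w l)"
  unfolding IA_def asum_def ..

lemma data_v: assumes "(x, v) \<in> IA_data m k" "i < m" "j < k"
  shows "0 < v t i j" "v t i j \<le> 1"
  using assms unfolding IA_data_def by auto

lemma data_x: assumes "(x, v) \<in> IA_data m k" "i < m" shows "0 < x t i"
  using assms unfolding IA_data_def by auto

lemma data_V: assumes "(x, v) \<in> IA_data m k" "j < k"
  shows "1 \<le> (\<Sum>l<m. v t l j)" "(\<Sum>l<m. v t l j) \<le> real m"
proof -
  obtain i where i: "i < m" "v t i j = 1" using assms unfolding IA_data_def by blast
  have "v t i j \<le> (\<Sum>l<m. v t l j)"
    by (rule member_le_sum) (use i data_v[OF assms(1) _ assms(2)] in \<open>auto intro: less_imp_le\<close>)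
  then show "1 \<le> (\<Sum>l<m. v t l j)" using i by simp
  have "(\<Sum>l<m. v t l j) \<le> (\<Sum>l<m. 1)"
    by (rule sum_mono) (use data_v[OF assms(1) _ assms(2)] in auto)
  then show "(\<Sum>l<m. v t l j) \<le> real m" by simp
qed

lemma simplex_D: assumes "w \<in> param_simplex k"
  shows "\<And>j. j < k \<Longrightarrow> 0 \<le> w j" "\<And>j. j < k \<Longrightarrow> w j \<le> 1" "(\<Sum>j<k. w j) = 1"
  using assms unfolding param_simplex_def by auto

lemma wv_nonneg: assumes "(x, v) \<in> IA_data m k" "w \<in> param_simplex k" "i < m" "j < k"
  shows "0 \<le> w j * v t i j"
  using simplex_D(1)[OF assms(2) assms(4)] data_v(1)[OF assms(1) assms(3) assms(4), of t] by simp

lemma Asum_swap: "(\<Sum>l<m. asum k v t w l) = (\<Sum>j<k. w j * (\<Sum>l<m. v t l j))"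
  unfolding asum_def by (simp add: sum_distrib_left sum.swap[of _ "{..<m}"])

lemma asum_nonneg: assumes "(x, v) \<in> IA_data m k" "w \<in> param_simplex k" "i < m"
  shows "0 \<le> asum k v t w i"
  unfolding asum_def using wv_nonneg[OF assms] by (intro sum_nonneg) auto

lemma asum_pos: assumes "(x, v) \<in> IA_data m k" "w \<in> param_simplex k" "i < m"
  shows "0 < asum k v t w i"
proof -
  have "\<exists>j<k. w j \<noteq> 0"
  proof (rule ccontr)
    assume "\<not> ?thesis"
    then have "(\<Sum>j<k. w j) = 0" by simp
    with simplex_D(3)[OF assms(2)] show False by simp
  qed
  then obtain j where j: "j < k" "w j \<noteq> 0" by blast
  have "0 < w j * v t i j"
    using j simplex_D(1)[OF assms(2) j(1)] data_v[OF assms(1) assms(3) j(1)] by simp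
  also have "\<dots> \<le> asum k v t w i" unfolding asum_def
    by (rule member_le_sum) (use j wv_nonneg[OF assms] in auto)
  finally show ?thesis .
qed

lemma Asum_ge1: assumes "(x, v) \<in> IA_data m k" "w \<in> param_simplex k"
  shows "1 \<le> (\<Sum>l<m. asum k v t w l)"
proof -
  have "1 = (\<Sum>j<k. w j * 1)" using simplex_D(3)[OF assms(2)] by simp
  also have "\<dots> \<le> (\<Sum>j<k. w j * (\<Sum>l<m. v t l j))"
    by (rule sum_mono, rule mult_left_mono) (use data_V[OF assms(1)] simplex_D(1)[OF assms(2)] in auto)
  finally show ?thesis unfolding Asum_swap .
qed

lemma IA_bounds: assumes "(x, v) \<in> IA_data m k" "w \<in> param_simplex k" "i < m"
  shows "0 < IA k m v t w i" "IA k m v t w i \<le> 1"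
proof -
  have A: "1 \<le> (\<Sum>l<m. asum k v t w l)" by (rule Asum_ge1[OF assms(1,2)])
  have a: "0 < asum k v t w i" by (rule asum_pos[OF assms])
  show "0 < IA k m v t w i" unfolding IA_asum using A a by simp
  have "asum k v t w i \<le> (\<Sum>l<m. asum k v t w l)"
    by (rule member_le_sum) (use assms asum_nonneg[OF assms(1,2)] in auto)
  then show "IA k m v t w i \<le> 1" unfolding IA_asum using A by simp
qed

lemma IA_ratio:
  assumes d: "(x, v) \<in> IA_data m k" and w: "w \<in> param_simplex k" and w0: "w0 \<in> param_simplex k"
    and i: "i < m" and del: "0 \<le> \<delta>" "\<delta> \<le> 1" and m: "m \<ge> 1"
    and ge: "\<And>j. j < k \<Longrightarrow> (1 - \<delta>) * w0 j \<le> w j"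
  shows "(1 - \<delta>) * IA k m v t w0 i \<le> (1 - \<delta> + \<delta> * real m) * IA k m v t w i"
proof -
  define A where "A = (\<Sum>l<m. asum k v t w l)"
  define A0 where "A0 = (\<Sum>l<m. asum k v t w0 l)"
  have A0: "1 \<le> A0" unfolding A0_def by (rule Asum_ge1[OF d w0])
  have A1: "1 \<le> A" unfolding A_def by (rule Asum_ge1[OF d w])
  have a_ge: "(1 - \<delta>) * asum k v t w0 i \<le> asum k v t w i"
    unfolding asum_def sum_distrib_left
    by (rule sum_mono) (use ge data_v[OF d i] in \<open>auto simp: mult.assoc[symmetric] intro!: mult_right_mono less_imp_le\<close>)
  have "A - (1 - \<delta>) * A0 = (\<Sum>j<k. (w j - (1 - \<delta>) * w0 j) * (\<Sum>l<m. v t l j))"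
    unfolding A_def A0_def Asum_swap sum_distrib_left
    by (simp add: sum_subtractf[symmetric] algebra_simps)
  also have "\<dots> \<le> (\<Sum>j<k. (w j - (1 - \<delta>) * w0 j) * real m)"
    by (rule sum_mono, rule mult_left_mono) (use ge data_V[OF d] in auto)
  also have "\<dots> = real m * ((\<Sum>j<k. w j) - (1 - \<delta>) * (\<Sum>j<k. w0 j))"
    by (simp add: sum_distrib_left sum_distrib_right sum_subtractf sum.distrib algebra_simps)
  also have "\<dots> = real m * \<delta>" using simplex_D(3)[OF w] simplex_D(3)[OF w0] by simp
  finally have "A \<le> (1 - \<delta>) * A0 + \<delta> * real m" by (simp add: mult.commute)
  also have "\<dots> \<le> (1 - \<delta> + \<delta> * real m) * A0"
  proof -
    have "\<delta> * real m * 1 \<le> \<delta> * real m * A0" using A0 del by (intro mult_left_mono) auto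
    then show ?thesis by (simp add: ring_distribs)
  qed
  finally have AA: "A \<le> (1 - \<delta> + \<delta> * real m) * A0" .
  have c_pos: "1 \<le> 1 - \<delta> + \<delta> * real m"
  proof -
    have "\<delta> * 1 \<le> \<delta> * real m" using del m by (intro mult_left_mono) auto
    then show ?thesis by linarith
  qed
  have an: "0 \<le> asum k v t w i" by (rule asum_nonneg[OF d w i])
  have "(1 - \<delta>) * IA k m v t w0 i = ((1 - \<delta>) * asum k v t w0 i) / A0"
    unfolding IA_asum A0_def by simp
  also have "\<dots> \<le> asum k v t w i / A0"
    using a_ge A0 by (simp add: divide_right_mono)
  also have "\<dots> = (1 - \<delta> + \<delta> * real m) * (asum k v t w i / ((1 - \<delta> + \<delta> * real m) * A0))"
    using c_pos by simp
  also have "\<dots> \<le> (1 - \<delta> + \<delta> * real m) * (asum k v t w i / A)"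
    using AA A1 c_pos an by (intro mult_left_mono divide_left_mono) auto
  also have "\<dots> = (1 - \<delta> + \<delta> * real m) * IA k m v t w i"
    unfolding IA_asum A_def ..
  finally show ?thesis .
qed


definition Sb :: "nat \<Rightarrow> nat \<Rightarrow> real \<Rightarrow> (nat \<Rightarrow> nat \<Rightarrow> nat \<Rightarrow> real) \<Rightarrow> nat \<Rightarrow> (nat \<Rightarrow> real) \<Rightarrow> nat \<Rightarrow> real" where
  "Sb m k \<epsilon> v t w i = (1 - \<epsilon> / (2 * (real t + 1)^2)) * IA k m v t w i + \<epsilon> / (2 * real m * (real t + 1)^2)"

lemma eps_mod_Sb: "eps_mod m \<epsilon> (\<lambda>d. IA k m (snd d)) d = (\<lambda>t w i. Sb m k \<epsilon> (snd d) t w i)"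
  unfolding eps_mod_def Sb_def by (intro ext) simp

lemma alpha_bounds: assumes "0 < \<epsilon>" "\<epsilon> < 1"
  shows "0 \<le> 1 - \<epsilon> / (2 * (real t + 1)^2)" "(real t + 1) / (real t + 2) \<le> 1 - \<epsilon> / (2 * (real t + 1)^2)"
proof -
  have p: "0 < 2 * (real t + 1)^2" by simp
  have "\<epsilon> / (2 * (real t + 1)^2) \<le> 1 / (2 * (real t + 1)^2)"
    using assms p by (intro divide_right_mono) auto
  also have "\<dots> \<le> 1 / (real t + 2)"
  proof (rule frac_le)
    have "real t + 1 \<le> (real t + 1)^2" by (rule self_le_power) auto
    then show "real t + 2 \<le> 2 * (real t + 1)^2" by linarith
  qed auto
  finally have *: "\<epsilon> / (2 * (real t + 1)^2) \<le> 1 / (real t + 2)" .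
  have "1 / (real t + 2) \<le> 1" by simp
  with * show "0 \<le> 1 - \<epsilon> / (2 * (real t + 1)^2)" by linarith
  have "(real t + 1) / (real t + 2) = 1 - 1 / (real t + 2)" by (simp add: field_simps)
  with * show "(real t + 1) / (real t + 2) \<le> 1 - \<epsilon> / (2 * (real t + 1)^2)" by linarith
qed

lemma Sb_bounds: assumes d: "(x, v) \<in> IA_data m k" and w: "w \<in> param_simplex k" and i: "i < m"
  and e: "0 < \<epsilon>" "\<epsilon> < 1"
  shows "0 \<le> Sb m k \<epsilon> v t w i" "Sb m k \<epsilon> v t w i \<le> 1"
proof -
  have m: "1 \<le> real m" using i by simp
  define \<alpha> where "\<alpha> = 1 - \<epsilon> / (2 * (real t + 1)^2)"
  define \<beta> where "\<beta> = \<epsilon> / (2 * real m * (real t + 1)^2)"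
  have a0: "0 \<le> \<alpha>" unfolding \<alpha>_def by (rule alpha_bounds[OF e])
  have b0: "0 \<le> \<beta>" unfolding \<beta>_def using e by simp
  have "\<beta> \<le> \<epsilon> / (2 * (real t + 1)^2)" unfolding \<beta>_def using e m
    by (intro divide_left_mono) (auto simp: mult_le_cancel_right1)
  then have ab: "\<alpha> + \<beta> \<le> 1" unfolding \<alpha>_def by linarith
  have I: "0 < IA k m v t w i" "IA k m v t w i \<le> 1" using IA_bounds[OF d w i] by auto
  have Sb: "Sb m k \<epsilon> v t w i = \<alpha> * IA k m v t w i + \<beta>" unfolding Sb_def \<alpha>_def \<beta>_def ..
  show "0 \<le> Sb m k \<epsilon> v t w i" unfolding Sb using a0 b0 I by simp
  have "\<alpha> * IA k m v t w i \<le> \<alpha>" using a0 I by (simp add: mult_left_le)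
  then show "Sb m k \<epsilon> v t w i \<le> 1" unfolding Sb using ab by linarith
qed

lemma Sb_ratio: assumes c: "0 \<le> c" "c \<le> 1" and e: "0 < \<epsilon>" "\<epsilon> < 1" and m: "1 \<le> m"
  and r: "c * IA k m v t w0 i \<le> IA k m v t w i"
  shows "c * Sb m k \<epsilon> v t w0 i \<le> Sb m k \<epsilon> v t w i"
proof -
  define \<alpha> where "\<alpha> = 1 - \<epsilon> / (2 * (real t + 1)^2)"
  define \<beta> where "\<beta> = \<epsilon> / (2 * real m * (real t + 1)^2)"
  have a0: "0 \<le> \<alpha>" unfolding \<alpha>_def by (rule alpha_bounds[OF e])
  have b0: "0 \<le> \<beta>" unfolding \<beta>_def using e by simp
  have "c * Sb m k \<epsilon> v t w0 i = \<alpha> * (c * IA k m v t w0 i) + c * \<beta>"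
    unfolding Sb_def \<alpha>_def \<beta>_def by (simp add: algebra_simps)
  also have "\<dots> \<le> \<alpha> * IA k m v t w i + \<beta>"
    using a0 b0 c r by (intro add_mono mult_left_mono) (auto simp: mult_left_le_one_le)
  also have "\<dots> = Sb m k \<epsilon> v t w i" unfolding Sb_def \<alpha>_def \<beta>_def ..
  finally show ?thesis .
qed

lemma dot_IA_pos: assumes d: "(x, v) \<in> IA_data m k" and w: "w \<in> param_simplex k" and m: "1 \<le> m"
  shows "0 < dotm m (IA k m v t w) (x t)"
  unfolding dotm_def
proof (rule sum_pos)
  have "0 \<in> {..<m}" using m by simp
  then show "{..<m} \<noteq> {}" by blast
  fix i assume "i \<in> {..<m}"
  then show "0 < IA k m v t w i * x t i" using IA_bounds[OF d w] data_x[OF d] by simp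
qed simp

lemma dot_Sb_lower: assumes d: "(x, v) \<in> IA_data m k" and w: "w \<in> param_simplex k"
  and e: "0 < \<epsilon>" "\<epsilon> < 1"
  shows "(real t + 1) / (real t + 2) * dotm m (IA k m v t w) (x t) \<le> dotm m (Sb m k \<epsilon> v t w) (x t)"
  unfolding dotm_def sum_distrib_left
proof (rule sum_mono)
  fix i assume i: "i \<in> {..<m}"
  define \<alpha> where "\<alpha> = 1 - \<epsilon> / (2 * (real t + 1)^2)"
  define \<beta> where "\<beta> = \<epsilon> / (2 * real m * (real t + 1)^2)"
  have a: "(real t + 1) / (real t + 2) \<le> \<alpha>" unfolding \<alpha>_def by (rule alpha_bounds[OF e])
  have b0: "0 \<le> \<beta>" unfolding \<beta>_def using e by simp
  have I: "0 < IA k m v t w i" "0 < x t i" using IA_bounds[OF d w] data_x[OF d] i by auto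
  have "(real t + 1) / (real t + 2) * (IA k m v t w i * x t i) \<le> \<alpha> * (IA k m v t w i * x t i)"
    using a I by (intro mult_right_mono) auto
  also have "\<dots> \<le> (\<alpha> * IA k m v t w i + \<beta>) * x t i"
    using b0 I by (simp add: algebra_simps)
  finally show "(real t + 1) / (real t + 2) * (IA k m v t w i * x t i) \<le> Sb m k \<epsilon> v t w i * x t i"
    unfolding Sb_def \<alpha>_def \<beta>_def .
qed

lemma dot_Sb_ratio: assumes d: "(x, v) \<in> IA_data m k" and c: "0 \<le> c" "c \<le> 1" and e: "0 < \<epsilon>" "\<epsilon> < 1"
  and r: "\<And>i. i < m \<Longrightarrow> c * IA k m v t w0 i \<le> IA k m v t w i"
  shows "c * dotm m (Sb m k \<epsilon> v t w0) (x t) \<le> dotm m (Sb m k \<epsilon> v t w) (x t)"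
  unfolding dotm_def sum_distrib_left
proof (rule sum_mono)
  fix i assume i: "i \<in> {..<m}"
  then have "c * Sb m k \<epsilon> v t w0 i \<le> Sb m k \<epsilon> v t w i"
    using r c e by (intro Sb_ratio) auto
  then show "c * (Sb m k \<epsilon> v t w0 i * x t i) \<le> Sb m k \<epsilon> v t w i * x t i"
    using data_x[OF d, of i t] i by (simp add: mult.assoc[symmetric] mult_right_mono)
qed

lemma prod_frac: "(\<Prod>t<n. (real t + 1) / (real t + 2)) = 1 / (real n + 1)"
  by (induction n) (simp_all add: field_simps)

lemma wealth_lower:
  assumes d: "(x, v) \<in> IA_data m k" and w0: "w0 \<in> param_simplex k" and c: "0 \<le> c" "c \<le> 1"
  and e: "0 < \<epsilon>" "\<epsilon> < 1" and m: "1 \<le> m"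
  and r: "\<And>t i. i < m \<Longrightarrow> c * IA k m v t w0 i \<le> IA k m v t w i"
  shows "c ^ n / (real n + 1) * wealth m x (\<lambda>s. IA k m v s w0) n \<le> wealth m x (\<lambda>s. Sb m k \<epsilon> v s w) n"
proof -
  have "c ^ n / (real n + 1) * wealth m x (\<lambda>s. IA k m v s w0) n =
        (\<Prod>t<n. c * ((real t + 1) / (real t + 2) * dotm m (IA k m v t w0) (x t)))"
    unfolding wealth_def prod.distrib prod_frac by simp
  also have "\<dots> \<le> (\<Prod>t<n. dotm m (Sb m k \<epsilon> v t w) (x t))"
  proof (rule prod_mono, rule conjI)
    fix t assume "t \<in> {..<n}"
    have D: "0 < dotm m (IA k m v t w0) (x t)" by (rule dot_IA_pos[OF d w0 m])
    show "0 \<le> c * ((real t + 1) / (real t + 2) * dotm m (IA k m v t w0) (x t))"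
      using c D by simp
    have "c * ((real t + 1) / (real t + 2) * dotm m (IA k m v t w0) (x t)) \<le> c * dotm m (Sb m k \<epsilon> v t w0) (x t)"
      using c dot_Sb_lower[OF d w0 e, of t] by (intro mult_left_mono) auto
    also have "\<dots> \<le> dotm m (Sb m k \<epsilon> v t w) (x t)"
      by (rule dot_Sb_ratio[OF d c e r])
    finally show "c * ((real t + 1) / (real t + 2) * dotm m (IA k m v t w0) (x t)) \<le> dotm m (Sb m k \<epsilon> v t w) (x t)" .
  qed
  finally show ?thesis unfolding wealth_def .
qed

lemma dot_Sb_bounds: assumes d: "(x, v) \<in> IA_data m k" and w: "w \<in> param_simplex k" and e: "0 < \<epsilon>" "\<epsilon> < 1"
  shows "0 \<le> dotm m (Sb m k \<epsilon> v t w) (x t)" "dotm m (Sb m k \<epsilon> v t w) (x t) \<le> (\<Sum>i<m. x t i)"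
proof -
  have b: "0 \<le> Sb m k \<epsilon> v t w i" "Sb m k \<epsilon> v t w i \<le> 1" "0 < x t i" if "i < m" for i
    using Sb_bounds[OF d w that e] data_x[OF d that] by auto
  show "0 \<le> dotm m (Sb m k \<epsilon> v t w) (x t)" unfolding dotm_def
    by (intro sum_nonneg) (auto intro!: mult_nonneg_nonneg b(1) less_imp_le[OF b(3)])
  show "dotm m (Sb m k \<epsilon> v t w) (x t) \<le> (\<Sum>i<m. x t i)" unfolding dotm_def
    using b by (intro sum_mono) (simp add: mult_left_le_one_le less_imp_le)
qed

lemma wealth_Sb_bounds: assumes d: "(x, v) \<in> IA_data m k" and w: "w \<in> param_simplex k" and e: "0 < \<epsilon>" "\<epsilon> < 1"
  shows "0 \<le> wealth m x (\<lambda>s. Sb m k \<epsilon> v s w) n" "wealth m x (\<lambda>s. Sb m k \<epsilon> v s w) n \<le> (\<Prod>s<n. \<Sum>i<m. x s i)"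
  unfolding wealth_def using dot_Sb_bounds[OF d w e]
  by (auto intro: prod_nonneg prod_mono)



abbreviation "PB \<equiv> PiM UNIV (\<lambda>_::nat. borel :: real measure)"

lemma meas_F[measurable]: "(\<lambda>w. wealth m x (\<lambda>s. Sb m k \<epsilon> v s w) n) \<in> borel_measurable PB"
  unfolding Sb_def IA_def wealth_def dotm_def by measurable

lemma meas_SbF[measurable]: "(\<lambda>w. Sb m k \<epsilon> v t w i * wealth m x (\<lambda>s. Sb m k \<epsilon> v s w) n) \<in> borel_measurable PB"
  unfolding Sb_def IA_def wealth_def dotm_def by measurable

lemma embed_simplex: assumes "u \<in> simplex_base k" "k \<ge> 1"
  shows "simplex_embed k u \<in> param_simplex k"
proof -
  have u0: "\<And>i. i < k - 1 \<Longrightarrow> 0 \<le> u i" and us: "(\<Sum>i<k-1. u i) \<le> 1"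
    using assms(1) unfolding simplex_base_def by auto
  have ule: "u i \<le> 1" if "i < k - 1" for i
  proof -
    have "u i \<le> (\<Sum>i<k-1. u i)" by (rule member_le_sum) (use that u0 in auto)
    with us show ?thesis by linarith
  qed
  have s0: "0 \<le> (\<Sum>i<k-1. u i)" using u0 by (intro sum_nonneg) auto
  have kk: "k = Suc (k - 1)" using assms(2) by simp
  have "(\<Sum>j<k. simplex_embed k u j) = (\<Sum>j<Suc (k-1). simplex_embed k u j)" using kk by simp
  also have "\<dots> = (\<Sum>j<k-1. simplex_embed k u j) + simplex_embed k u (k-1)" by simp
  also have "(\<Sum>j<k-1. simplex_embed k u j) = (\<Sum>j<k-1. u j)"
    by (rule sum.cong) (auto simp: simplex_embed_def)
  also have "simplex_embed k u (k-1) = 1 - (\<Sum>j<k-1. u j)" by (simp add: simplex_embed_def)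
  finally have "(\<Sum>j<k. simplex_embed k u j) = 1" by simp
  moreover have "\<forall>j<k. 0 \<le> simplex_embed k u j \<and> simplex_embed k u j \<le> 1"
    using u0 ule us s0 by (auto simp: simplex_embed_def)
  moreover have "\<forall>j\<ge>k. simplex_embed k u j = 0"
    using assms(2) by (auto simp: simplex_embed_def)
  ultimately show ?thesis unfolding param_simplex_def by blast
qed

lemma integrable_NN:
  assumes g: "g \<in> borel_measurable PB" and k: "k \<ge> 1"
    and b: "\<And>w. w \<in> param_simplex k \<Longrightarrow> \<bar>g w\<bar> \<le> B"
  shows "integrable (NN k) (\<lambda>u. g (simplex_embed k u) :: real)"
proof -
  interpret prob_space "NN k" by (rule prob_NN)
  have "integrable (NN k) (\<lambda>u. g (simplex_embed k u))"
  proof (rule integrable_const_bound)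
    show "AE u in NN k. norm (g (simplex_embed k u)) \<le> B"
      using AE_NN by eventually_elim (use b embed_simplex k in auto)
    show "(\<lambda>u. g (simplex_embed k u)) \<in> borel_measurable (NN k)"
      using g by measurable
  qed
  then show ?thesis .
qed

lemma integrable_unif:
  assumes g: "g \<in> borel_measurable PB" and k: "k \<ge> 1"
    and b: "\<And>w. w \<in> param_simplex k \<Longrightarrow> \<bar>g w\<bar> \<le> B"
  shows "integrable (unif_simplex k) (g :: _ \<Rightarrow> real)"
  unfolding unif_eq integrable_distr_eq[OF embed_meas_NN g] by (rule integrable_NN[OF assms])

lemma integral_unif:
  assumes g: "g \<in> borel_measurable PB"
  shows "integral\<^sup>L (unif_simplex k) (g :: _ \<Rightarrow> real) = (\<integral>u. g (simplex_embed k u) \<partial>NN k)"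
  unfolding unif_eq by (rule integral_distr[OF embed_meas_NN g])


lemma F_bound: assumes d: "(x, v) \<in> IA_data m k" and e: "0 < \<epsilon>" "\<epsilon> < 1"
  shows "\<And>w. w \<in> param_simplex k \<Longrightarrow> \<bar>wealth m x (\<lambda>s. Sb m k \<epsilon> v s w) n\<bar> \<le> (\<Prod>s<n. \<Sum>i<m. x s i)"
  using wealth_Sb_bounds[OF d _ e] by (simp add: abs_of_nonneg)

lemma SbF_bound: assumes d: "(x, v) \<in> IA_data m k" and e: "0 < \<epsilon>" "\<epsilon> < 1" and i: "i < m"
  shows "\<And>w. w \<in> param_simplex k \<Longrightarrow> \<bar>Sb m k \<epsilon> v t w i * wealth m x (\<lambda>s. Sb m k \<epsilon> v s w) n\<bar> \<le> (\<Prod>s<n. \<Sum>i<m. x s i)"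
proof -
  fix w assume w: "w \<in> param_simplex k"
  have "\<bar>Sb m k \<epsilon> v t w i * wealth m x (\<lambda>s. Sb m k \<epsilon> v s w) n\<bar> = Sb m k \<epsilon> v t w i * wealth m x (\<lambda>s. Sb m k \<epsilon> v s w) n"
    using Sb_bounds[OF d w i e] wealth_Sb_bounds[OF d w e] by (simp add: abs_of_nonneg)
  also have "\<dots> \<le> 1 * wealth m x (\<lambda>s. Sb m k \<epsilon> v s w) n"
    using Sb_bounds[OF d w i e] wealth_Sb_bounds[OF d w e] by (intro mult_right_mono) auto
  also have "\<dots> \<le> (\<Prod>s<n. \<Sum>i<m. x s i)" using wealth_Sb_bounds[OF d w e] by simp
  finally show "\<bar>Sb m k \<epsilon> v t w i * wealth m x (\<lambda>s. Sb m k \<epsilon> v s w) n\<bar> \<le> (\<Prod>s<n. \<Sum>i<m. x s i)" .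
qed

lemma lower_bound:
  assumes d: "(x, v) \<in> IA_data m k" and w0: "w0 \<in> param_simplex k" and e: "0 < \<epsilon>" "\<epsilon> < 1"
    and m: "1 \<le> m" and k: "2 \<le> k"
  shows "(real n / (real n + real m))^n / (real n + 1) * (1 / ((real n + 1) * real (k - 1)))^(k-1)
           * wealth m x (\<lambda>s. IA k m v s w0) n
         \<le> (\<integral>w. wealth m x (\<lambda>s. Sb m k \<epsilon> v s w) n \<partial>unif_simplex k)"
proof -
  interpret prob_space "NN k" by (rule prob_NN)
  define \<delta> where "\<delta> = 1 / (real n + 1)"
  define c where "c = real n / (real n + real m)"
  define h where "h = \<delta> / real (k - 1)"
  define a where "a = (\<lambda>i. (1 - \<delta>) * w0 i)"
  define box where "box = PiE {..<k-1} (\<lambda>i. {a i..a i + h})"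
  define R0 where "R0 = wealth m x (\<lambda>s. IA k m v s w0) n"
  define C where "C = c ^ n / (real n + 1) * R0"
  define F where "F = (\<lambda>w. wealth m x (\<lambda>s. Sb m k \<epsilon> v s w) n)"
  have del: "0 < \<delta>" "\<delta> \<le> 1" unfolding \<delta>_def by auto
  have k1: "real (k - 1) > 0" using k by simp
  have h0: "0 \<le> h" unfolding h_def using del k1 by simp
  have hk: "real (k - 1) * h = \<delta>" unfolding h_def using k1 by simp
  have c01: "0 \<le> c" "c \<le> 1" unfolding c_def by (auto simp: divide_le_eq_1)
  have R0: "0 \<le> R0" unfolding R0_def wealth_def
    using dot_IA_pos[OF d w0 m] by (intro prod_nonneg) (simp add: less_imp_le)
  have C0: "0 \<le> C" unfolding C_def using c01 R0 by simp
  have a0: "\<And>i. i < k - 1 \<Longrightarrow> 0 \<le> a i" unfolding a_def using simplex_D(1)[OF w0] del by simp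
  have kk: "k = Suc (k - 1)" using k by simp
  have sw0: "(\<Sum>i<k-1. w0 i) + w0 (k-1) = 1"
    using simplex_D(3)[OF w0] kk by (metis sum.lessThan_Suc)
  have w0l: "0 \<le> w0 (k-1)" using simplex_D(1)[OF w0] k by simp
  have suma: "(\<Sum>i<k-1. a i) = (1 - \<delta>) * (\<Sum>i<k-1. w0 i)" unfolding a_def by (simp add: sum_distrib_left)
  have boxc: "(\<Sum>i<k-1. a i) + real (k-1) * h \<le> 1"
  proof -
    have "(1 - \<delta>) * (\<Sum>i<k-1. w0 i) \<le> (1 - \<delta>) * 1"
      using sw0 w0l del by (intro mult_left_mono) auto
    then have "(1 - \<delta>) * (\<Sum>i<k-1. w0 i) \<le> 1 - \<delta>" by simp
    then show ?thesis unfolding suma hk by linarith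
  qed
  have key: "C \<le> F (simplex_embed k u)" if u: "u \<in> simplex_base k" "u \<in> box" for u
  proof -
    define w where "w = simplex_embed k u"
    have w: "w \<in> param_simplex k" unfolding w_def using embed_simplex[OF u(1)] k by simp
    have ui: "a i \<le> u i \<and> u i \<le> a i + h" if "i < k - 1" for i
      using PiE_mem[OF u(2)[unfolded box_def], of i] that by simp
    have ge: "(1 - \<delta>) * w0 j \<le> w j" if j: "j < k" for j
    proof (cases "j < k - 1")
      case True
      then show ?thesis using ui[OF True] unfolding w_def simplex_embed_def a_def by simp
    next
      case False
      then have jk: "j = k - 1" using j by simp
      have "(\<Sum>i<k-1. u i) \<le> (\<Sum>i<k-1. a i + h)" using ui by (intro sum_mono) simp
      also have "\<dots> = (\<Sum>i<k-1. a i) + real (k-1) * h" by (simp add: sum.distrib)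
      also have "\<dots> = (1 - \<delta>) * (\<Sum>i<k-1. w0 i) + \<delta>" unfolding suma hk ..
      finally have s1: "(\<Sum>i<k-1. u i) \<le> (1 - \<delta>) * (\<Sum>i<k-1. w0 i) + \<delta>" .
      have "w0 (k-1) = 1 - (\<Sum>i<k-1. w0 i)" using sw0 by linarith
      then have "(1 - \<delta>) * w0 (k-1) = (1 - \<delta>) * (1 - (\<Sum>i<k-1. w0 i))" by simp
      also have "\<dots> = 1 - \<delta> - (1 - \<delta>) * (\<Sum>i<k-1. w0 i)"
        by (simp add: algebra_simps)
      finally have s2: "(1 - \<delta>) * w0 (k-1) = 1 - \<delta> - (1 - \<delta>) * (\<Sum>i<k-1. w0 i)" .
      from s1 s2 have "(1 - \<delta>) * w0 (k-1) \<le> 1 - (\<Sum>i<k-1. u i)" by linarith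
      then show ?thesis unfolding w_def simplex_embed_def jk using k by simp
    qed
    have r: "c * IA k m v t w0 i \<le> IA k m v t w i" if i: "i < m" for t i
    proof -
      have "\<delta> * 1 \<le> \<delta> * real m" using del m by (intro mult_left_mono) auto
      then have pos: "0 < 1 - \<delta> + \<delta> * real m" using del by linarith
      have "(1 - \<delta>) * IA k m v t w0 i \<le> (1 - \<delta> + \<delta> * real m) * IA k m v t w i"
        by (rule IA_ratio[OF d w w0 i _ _ m ge]) (use del in auto)
      moreover have "c = (1 - \<delta>) / (1 - \<delta> + \<delta> * real m)"
      proof -
        have e1: "1 - \<delta> = real n / (real n + 1)" unfolding \<delta>_def by (simp add: field_simps)
        have e3: "\<delta> * real m = real m / (real n + 1)" unfolding \<delta>_def by simp
        have e2: "1 - \<delta> + \<delta> * real m = (real n + real m) / (real n + 1)"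
          unfolding e1 e3 by (simp add: add_divide_distrib)
        show ?thesis unfolding e2 unfolding e1 c_def
          by (subst divide_divide_times_eq) (simp_all add: mult.commute[of "real n + 1"])
      qed
      ultimately show ?thesis using pos by (simp add: pos_divide_le_eq mult.commute)
    qed
    show ?thesis unfolding C_def R0_def F_def w_def[symmetric]
      by (rule wealth_lower[OF d w0 c01 e m r])
  qed
  have Fnn: "0 \<le> F (simplex_embed k u)" if "u \<in> simplex_base k" for u
    unfolding F_def using wealth_Sb_bounds[OF d embed_simplex[OF that] e] k by simp
  have box_sets': "box \<in> sets (NN k)" unfolding box_def by simp
  have mbox: "h^(k-1) \<le> measure (NN k) box"
    unfolding box_def by (rule measure_box_NN[OF a0 h0 boxc])
  have fin: "emeasure (NN k) box < \<infinity>"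
    using emeasure_finite[of box] by (simp add: less_top[symmetric] del: emeasure_uniform_measure)
  have intI: "integrable (NN k) (\<lambda>u. C * indicator box u :: real)"
    by (intro integrable_mult_right integrable_real_indicator[OF box_sets' fin])
  have intF: "integrable (NN k) (\<lambda>u. F (simplex_embed k u))"
    unfolding F_def by (rule integrable_NN[OF meas_F _ F_bound[OF d e]]) (use k in auto)
  have "C * h^(k-1) \<le> C * measure (NN k) box" using C0 mbox by (intro mult_left_mono)
  also have "\<dots> = (\<integral>u. C * indicator box u \<partial>NN k)"
    using sets.sets_into_space[OF box_sets'] by (simp add: Int_absorb2 del: measure_uniform_measure emeasure_uniform_measure)
  also have "\<dots> \<le> (\<integral>u. F (simplex_embed k u) \<partial>NN k)"
  proof (rule integral_mono_AE[OF intI intF])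
    show "AE u in NN k. C * indicator box u \<le> F (simplex_embed k u)"
      using AE_NN by eventually_elim (auto simp: indicator_def key Fnn)
  qed
  also have "\<dots> = (\<integral>w. F w \<partial>unif_simplex k)"
    unfolding F_def by (rule integral_unif[OF meas_F, symmetric])
  finally have fin2: "C * h^(k-1) \<le> (\<integral>w. F w \<partial>unif_simplex k)" .
  have hh: "h = 1 / ((real n + 1) * real (k - 1))" unfolding h_def \<delta>_def by simp
  have "(real n / (real n + real m))^n / (real n + 1) * (1 / ((real n + 1) * real (k - 1)))^(k-1)
           * wealth m x (\<lambda>s. IA k m v s w0) n = C * h^(k-1)"
    unfolding C_def R0_def hh c_def by (simp add: mult_ac)
  with fin2 show ?thesis unfolding F_def by simp
qed


lemma e0_simplex: assumes "k \<ge> 1" shows "(\<lambda>j. if j = 0 then 1 else 0) \<in> param_simplex k"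
  using assms unfolding param_simplex_def by (auto simp: sum.delta)

lemma I_pos:
  assumes d: "(x, v) \<in> IA_data m k" and e: "0 < \<epsilon>" "\<epsilon> < 1" and m: "1 \<le> m" and k: "2 \<le> k"
  shows "0 < (\<integral>w. wealth m x (\<lambda>s. Sb m k \<epsilon> v s w) n \<partial>unif_simplex k)"
proof -
  define w0 where "w0 = (\<lambda>j::nat. if j = 0 then 1 else (0::real))"
  have w0: "w0 \<in> param_simplex k" unfolding w0_def by (rule e0_simplex) (use k in simp)
  have R0: "0 < wealth m x (\<lambda>s. IA k m v s w0) n" unfolding wealth_def
    using dot_IA_pos[OF d w0 m] by (intro prod_pos) simp
  have c: "0 < (real n / (real n + real m))^n"
    using m by (cases "n = 0") auto
  have h: "0 < (1 / ((real n + 1) * real (k - 1)))^(k-1)" using k by simp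
  have "0 < (real n / (real n + real m))^n / (real n + 1) * (1 / ((real n + 1) * real (k - 1)))^(k-1)
           * wealth m x (\<lambda>s. IA k m v s w0) n"
    using R0 c h by simp
  also have "\<dots> \<le> (\<integral>w. wealth m x (\<lambda>s. Sb m k \<epsilon> v s w) n \<partial>unif_simplex k)"
    by (rule lower_bound[OF d w0 e m k])
  finally show ?thesis .
qed

lemma telescope:
  assumes d: "(x, v) \<in> IA_data m k" and e: "0 < \<epsilon>" "\<epsilon> < 1" and m: "1 \<le> m" and k: "2 \<le> k"
  shows "wealth m x (\<lambda>t i. (\<integral>w. Sb m k \<epsilon> v t w i * wealth m x (\<lambda>s. Sb m k \<epsilon> v s w) t \<partial>unif_simplex k)
            / (\<integral>w. wealth m x (\<lambda>s. Sb m k \<epsilon> v s w) t \<partial>unif_simplex k)) n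
         = (\<integral>w. wealth m x (\<lambda>s. Sb m k \<epsilon> v s w) n \<partial>unif_simplex k)"
proof (induction n)
  case 0
  interpret prob_space "unif_simplex k" by (rule prob_unif)
  show ?case by (simp add: wealth_def prob_space)
next
  case (Suc n)
  define F where "F = (\<lambda>t w. wealth m x (\<lambda>s. Sb m k \<epsilon> v s w) t)"
  define I where "I = (\<lambda>t. \<integral>w. F t w \<partial>unif_simplex k)"
  have Ipos: "0 < I n" unfolding I_def F_def by (rule I_pos[OF d e m k])
  have intS: "integrable (unif_simplex k) (\<lambda>w. Sb m k \<epsilon> v n w i * F n w)" if "i < m" for i
    unfolding F_def by (rule integrable_unif[OF meas_SbF _ SbF_bound[OF d e that]]) (use k in auto)
  have FS: "F (Suc n) w = (\<Sum>i<m. Sb m k \<epsilon> v n w i * F n w * x n i)" for w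
    unfolding F_def wealth_def dotm_def by (simp add: sum_distrib_right mult_ac)
  have "dotm m (\<lambda>i. (\<integral>w. Sb m k \<epsilon> v n w i * F n w \<partial>unif_simplex k) / I n) (x n)
        = (\<Sum>i<m. (\<integral>w. Sb m k \<epsilon> v n w i * F n w * x n i \<partial>unif_simplex k)) / I n"
    unfolding dotm_def by (simp add: sum_divide_distrib)
  also have "(\<Sum>i<m. (\<integral>w. Sb m k \<epsilon> v n w i * F n w * x n i \<partial>unif_simplex k))
        = (\<integral>w. (\<Sum>i<m. Sb m k \<epsilon> v n w i * F n w * x n i) \<partial>unif_simplex k)"
    by (rule Bochner_Integration.integral_sum[symmetric]) (auto intro!: integrable_mult_left intS)
  also have "\<dots> = I (Suc n)" unfolding I_def FS ..
  finally have dd: "dotm m (\<lambda>i. (\<integral>w. Sb m k \<epsilon> v n w i * F n w \<partial>unif_simplex k) / I n) (x n) = I (Suc n) / I n" .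
  have "wealth m x (\<lambda>t i. (\<integral>w. Sb m k \<epsilon> v t w i * F t w \<partial>unif_simplex k) / I t) (Suc n)
      = wealth m x (\<lambda>t i. (\<integral>w. Sb m k \<epsilon> v t w i * F t w \<partial>unif_simplex k) / I t) n
        * dotm m (\<lambda>i. (\<integral>w. Sb m k \<epsilon> v n w i * F n w \<partial>unif_simplex k) / I n) (x n)"
    unfolding wealth_def by simp
  also have "\<dots> = I n * (I (Suc n) / I n)"
  proof -
    have "wealth m x (\<lambda>t i. (\<integral>w. Sb m k \<epsilon> v t w i * F t w \<partial>unif_simplex k) / I t) n = I n"
      using Suc.IH unfolding F_def I_def .
    then show ?thesis unfolding dd by simp
  qed
  also have "\<dots> = I (Suc n)" using Ipos by simp
  finally show ?case unfolding F_def I_def .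
qed


lemma eta_lim: fixes k m :: nat assumes "k \<ge> 2"
  shows "(\<lambda>n. (ln (real n + 1) + real (k - 1) * ln ((real n + 1) * real (k - 1))) / real n
              - ln (real n / (real n + real m))) \<longlonglongrightarrow> 0"
proof -
  define K where "K = real (k - 1)"
  have "K > 0" unfolding K_def using assms by simp
  then have "(\<lambda>n. (ln (real n + 1) + K * ln ((real n + 1) * K)) / real n
               - ln (real n / (real n + real m))) \<longlonglongrightarrow> 0"
    by real_asymp
  then show ?thesis unfolding K_def .
qed

lemma ln_identity:
  assumes n: "n \<ge> 1" and k: "k \<ge> 2" and m: "m \<ge> 1" and R: "0 < R"
  shows "ln ((real n / (real n + real m))^n / (real n + 1) * (1 / ((real n + 1) * real (k - 1)))^(k-1) * R) / real n
       = ln R / real n - ((ln (real n + 1) + real (k - 1) * ln ((real n + 1) * real (k - 1))) / real n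
              - ln (real n / (real n + real m)))"
proof -
  have p1: "0 < real n / (real n + real m)" using n by simp
  have p2: "0 < (real n + 1) * real (k - 1)" using k by simp
  define a where "a = real n / (real n + real m)"
  define b where "b = (real n + 1) * real (k - 1)"
  have a: "0 < a" unfolding a_def using p1 .
  have b: "0 < b" unfolding b_def using p2 .
  have X: "0 < a^n / (real n + 1)" using a by simp
  have Y: "0 < (1 / b)^(k-1)" using b by simp
  have "ln (a^n / (real n + 1) * (1 / b)^(k-1) * R) = ln (a^n / (real n + 1)) + ln ((1 / b)^(k-1)) + ln R"
    by (simp only: ln_mult_pos[OF mult_pos_pos[OF X Y] R] ln_mult_pos[OF X Y])
  also have "ln (a^n / (real n + 1)) = real n * ln a - ln (real n + 1)"
    using a by (simp add: ln_div ln_realpow)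
  also have "ln ((1 / b)^(k-1)) = - (real (k - 1) * ln b)"
    using b by (simp add: ln_realpow ln_div)
  finally have "ln ((real n / (real n + real m))^n / (real n + 1) * (1 / ((real n + 1) * real (k - 1)))^(k-1) * R)
      = real n * ln (real n / (real n + real m)) - ln (real n + 1) - real (k - 1) * ln ((real n + 1) * real (k - 1)) + ln R"
    unfolding a_def b_def by simp
  then show ?thesis using n by (simp add: field_simps)
qed

theorem mainTheorem9:
  fixes m k :: nat
  assumes "m \<ge> 2" and "k \<ge> 2"
  shows "universalizable (IA_data m k) m fst (param_simplex k) (unif_simplex k)
           (\<lambda>d. IA k m (snd d))"
  unfolding universalizable_def is_universalization_def
proof (intro allI impI)
  fix \<epsilon> :: real assume e: "0 < \<epsilon> \<and> \<epsilon> < 1"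
  have m: "1 \<le> m" and k: "2 \<le> k" using assms by auto
  define \<eta> where "\<eta> = (\<lambda>n. (ln (real n + 1) + real (k - 1) * ln ((real n + 1) * real (k - 1))) / real n
              - ln (real n / (real n + real m)))"
  show "\<exists>\<eta>. \<eta> \<longlonglongrightarrow> 0 \<and> (\<forall>d\<in>IA_data m k. \<forall>n\<ge>1.
           (SUP w\<in>param_simplex k. growth m (fst d) (\<lambda>t. IA k m (snd d) t w) n) - \<eta> n
           \<le> growth m (fst d) (univ_port (unif_simplex k) m fst (eps_mod m \<epsilon> (\<lambda>d. IA k m (snd d))) d) n)"
  proof (intro exI conjI ballI allI impI)
    show "\<eta> \<longlonglongrightarrow> 0" unfolding \<eta>_def by (rule eta_lim[OF k])
    fix d and n :: nat assume dd: "d \<in> IA_data m k" and n: "1 \<le> n"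
    obtain x v where dxv: "d = (x, v)" by (cases d)
    have d: "(x, v) \<in> IA_data m k" using dd dxv by simp
    have e1: "0 < \<epsilon>" "\<epsilon> < 1" using e by auto
    define I where "I = (\<integral>w. wealth m x (\<lambda>s. Sb m k \<epsilon> v s w) n \<partial>unif_simplex k)"
    have U: "univ_port (unif_simplex k) m fst (eps_mod m \<epsilon> (\<lambda>d. IA k m (snd d))) d =
      (\<lambda>t i. (\<integral>w. Sb m k \<epsilon> v t w i * wealth m x (\<lambda>s. Sb m k \<epsilon> v s w) t \<partial>unif_simplex k)
            / (\<integral>w. wealth m x (\<lambda>s. Sb m k \<epsilon> v s w) t \<partial>unif_simplex k))"
      unfolding univ_port_def eps_mod_Sb dxv by simp
    have gU: "growth m (fst d) (univ_port (unif_simplex k) m fst (eps_mod m \<epsilon> (\<lambda>d. IA k m (snd d))) d) n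
        = ln I / real n"
      unfolding growth_def U using telescope[OF d e1 m k] unfolding I_def dxv by simp
    have "growth m x (\<lambda>t. IA k m v t w0) n - \<eta> n \<le> ln I / real n" if w0: "w0 \<in> param_simplex k" for w0
    proof -
      define R where "R = wealth m x (\<lambda>s. IA k m v s w0) n"
      have R: "0 < R" unfolding R_def wealth_def
        using dot_IA_pos[OF d w0 m] by (intro prod_pos) simp
      define L where "L = (real n / (real n + real m))^n / (real n + 1) * (1 / ((real n + 1) * real (k - 1)))^(k-1) * R"
      have Lpos: "0 < L" unfolding L_def using R n k by simp
      have LI: "L \<le> I" unfolding L_def R_def I_def by (rule lower_bound[OF d w0 e1 m k])
      have "growth m x (\<lambda>t. IA k m v t w0) n - \<eta> n = ln L / real n"
        unfolding growth_def L_def \<eta>_def R_def[symmetric] using ln_identity[OF n k m R] by simp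
      also have "\<dots> \<le> ln I / real n"
        using Lpos LI n by (intro divide_right_mono) auto
      finally show ?thesis .
    qed
    then have "(SUP w\<in>param_simplex k. growth m x (\<lambda>t. IA k m v t w) n) \<le> ln I / real n + \<eta> n"
      by (intro cSUP_least) (use e0_simplex[of k] k in \<open>auto simp: algebra_simps\<close>)
    then show "(SUP w\<in>param_simplex k. growth m (fst d) (\<lambda>t. IA k m (snd d) t w) n) - \<eta> n
           \<le> growth m (fst d) (univ_port (unif_simplex k) m fst (eps_mod m \<epsilon> (\<lambda>d. IA k m (snd d))) d) n"
      unfolding gU using dxv by simp
  qed
qed

end
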